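(* Let $\mathcal{B}$ be a boolean algebra and let $\mathcal{M}$ be a well behaved $\mathcal{B}$-valued model for a relational language $\mathcal{L}$. The following are equivalent: (a) $\mathcal{M}$ is full; (b) for all $\mathcal{L}_{\mathcal{M}}$-formulae $\phi(x_0,x_1,\dots,x_n)$ and all $\tau_1,\dots,\tau_n\in M$ there exist $m\in\mathbb{N}$ and $\sigma_1,\dots,\sigma_m\in M$ such that \[\bigvee_{\tau\in M}[\![\phi(\tau,\tau_1,\dots,\tau_n)]\!]=\bigvee_{i=1}^m[\![\phi(\sigma_i,\tau_1,\dots,\tau_n)]\!].\]
   Context: Let $\mathcal{L}$ be a relational language (relation and constant symbols only) and $\mathcal{B}$ a boolean algebra. A $\mathcal{B}$-valued model $\mathcal{M}$ consists of a non-empty set $M$, a map $(\sigma,\tau)\mapsto[\![\sigma=\tau]\!]\in\mathcal{B}$, maps $(\sigma_1,\dots,\sigma_n)\mapsto[\![R(\sigma_1,\dots,\sigma_n)]\!]\in\mathcal{B}$ for each $n$-ary relation symbol $R$, and elements $c^{\mathcal{M}}\in M$ for each constant $c$, such that $[\![\sigma=\sigma]\!]=1$, $[\![\sigma=\tau]\!]=[\![\tau=\sigma]\!]$, $[\![\sigma=\tau]\!]\wedge[\![\tau=\pi]\!]\le[\![\sigma=\pi]\!]$ and $\bigwedge_i[\![\sigma_i=\tau_i]\!]\wedge[\![R(\vec\sigma)]\!]\le[\![R(\vec\tau)]\!]$. Formulas of $\mathcal{L}_{\mathcal{M}}=\mathcal{L}\cup\{c_\sigma:\sigma\in M\}$ without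 free variables are evaluated in the boolean completion $\mathrm{RO}(\mathcal{B}^+)$ of $\mathcal{B}$ (with $\mathcal{B}$ identified with a dense subalgebra): atomic ones as given, $[\![\varphi\wedge\psi]\!]=[\![\varphi]\!]\wedge[\![\psi]\!]$, $[\![\neg\varphi]\!]=\neg[\![\varphi]\!]$, $[\![\exists x\varphi(x)]\!]=\bigvee_{\tau\in M}[\![\varphi(\tau)]\!]$. $\mathcal{M}$ is well behaved if all these values lie in $\mathcal{B}$. For an ultrafilter $G$ on $\mathcal{B}$, $\mathcal{M}/_G$ is the two-valued structure with domain $\{[\sigma]_G:\sigma\in M\}$, where $[\sigma]_G=\{\tau\in M:[\![\tau=\sigma]\!]\in G\}$, in which $R([\sigma_1]_G,\dots,[\sigma_n]_G)$ holds iff $[\![R(\sigma_1,\dots,\sigma_n)]\!]\in G$, and constants are interpreted as $[c^{\mathcal{M}}]_G$. $\mathcal{M}$ is full if for every ultrafilter $G$ on $\mathcal{B}$, every formula $\phi(x_1,\dots,x_n)$ and all $\tau_1,\dots,\tau_n\in M$: $\mathcal{M}/_G\models\phi([\tau_1]_G,\dots,[\tau_n]_G)$ iff $[\![\phi(\tau_1,\dots,\tau_n)]\!]\in G$. *)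

theory Defs
  imports Main
begin

text \<open>Terms of a relational language L_M: variables, constant symbols of L,
  and the parameters c_sigma for sigma in M.\<close>
datatype ('c, 'm) trm = Var nat | Cst 'c | Par 'm

datatype ('r, 'c, 'm) fm =
    Eq "('c, 'm) trm" "('c, 'm) trm"
  | Rel 'r "('c, 'm) trm list"
  | And "('r, 'c, 'm) fm" "('r, 'c, 'm) fm"
  | Neg "('r, 'c, 'm) fm"
  | Ex nat "('r, 'c, 'm) fm"

fun wf :: "('r \<Rightarrow> nat) \<Rightarrow> ('r, 'c, 'm) fm \<Rightarrow> bool" where
  "wf ar (Eq t u) = True"
| "wf ar (Rel R ts) = (length ts = ar R)"
| "wf ar (And p q) = (wf ar p \<and> wf ar q)"
| "wf ar (Neg p) = wf ar p"
| "wf ar (Ex x p) = wf ar p"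

fun fv_trm :: "('c, 'm) trm \<Rightarrow> nat set" where
  "fv_trm (Var x) = {x}"
| "fv_trm (Cst c) = {}"
| "fv_trm (Par m) = {}"

fun fv :: "('r, 'c, 'm) fm \<Rightarrow> nat set" where
  "fv (Eq t u) = fv_trm t \<union> fv_trm u"
| "fv (Rel R ts) = (\<Union>t\<in>set ts. fv_trm t)"
| "fv (And p q) = fv p \<union> fv q"
| "fv (Neg p) = fv p"
| "fv (Ex x p) = fv p - {x}"

fun pars_trm :: "('c, 'm) trm \<Rightarrow> 'm set" where
  "pars_trm (Par m) = {m}"
| "pars_trm _ = {}"

text \<open>Parameters c_sigma occurring in a formula (empty iff it is an L-formula).\<close>
fun pars :: "('r, 'c, 'm) fm \<Rightarrow> 'm set" where
  "pars (Eq t u) = pars_trm t \<union> pars_trm u"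
| "pars (Rel R ts) = (\<Union>t\<in>set ts. pars_trm t)"
| "pars (And p q) = pars p \<union> pars q"
| "pars (Neg p) = pars p"
| "pars (Ex x p) = pars p"

fun substs_trm :: "(nat \<Rightarrow> 'm option) \<Rightarrow> ('c, 'm) trm \<Rightarrow> ('c, 'm) trm" where
  "substs_trm s (Var x) = (case s x of None \<Rightarrow> Var x | Some m \<Rightarrow> Par m)"
| "substs_trm s (Cst c) = Cst c"
| "substs_trm s (Par m) = Par m"

fun substs :: "(nat \<Rightarrow> 'm option) \<Rightarrow> ('r, 'c, 'm) fm \<Rightarrow> ('r, 'c, 'm) fm" where
  "substs s (Eq t u) = Eq (substs_trm s t) (substs_trm s u)"
| "substs s (Rel R ts) = Rel R (map (substs_trm s) ts)"
| "substs s (And p q) = And (substs s p) (substs s q)"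
| "substs s (Neg p) = Neg (substs s p)"
| "substs s (Ex x p) = Ex x (substs (s(x := None)) p)"

definition subst :: "nat \<Rightarrow> 'm \<Rightarrow> ('r, 'c, 'm) fm \<Rightarrow> ('r, 'c, 'm) fm" where
  "subst x \<sigma> p = substs ((\<lambda>_. None)(x := Some \<sigma>)) p"

fun fdepth :: "('r, 'c, 'm) fm \<Rightarrow> nat" where
  "fdepth (Eq t u) = 0"
| "fdepth (Rel R ts) = 0"
| "fdepth (And p q) = Suc (fdepth p + fdepth q)"
| "fdepth (Neg p) = Suc (fdepth p)"
| "fdepth (Ex x p) = Suc (fdepth p)"

lemma fdepth_substs [simp]: "fdepth (substs s p) = fdepth p"
  by (induction p arbitrary: s) auto

lemma fdepth_subst [simp]: "fdepth (subst x \<sigma> p) = fdepth p"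
  by (simp add: subst_def)

definition is_sup :: "'b::boolean_algebra set \<Rightarrow> 'b \<Rightarrow> bool" where
  "is_sup S b \<longleftrightarrow> (\<forall>a\<in>S. a \<le> b) \<and> (\<forall>c. (\<forall>a\<in>S. a \<le> c) \<longrightarrow> b \<le> c)"

fun tm :: "('c \<Rightarrow> 'm) \<Rightarrow> ('c, 'm) trm \<Rightarrow> 'm" where
  "tm cst (Var x) = undefined"
| "tm cst (Cst c) = cst c"
| "tm cst (Par m) = m"

text \<open>Boolean value of an L_M-sentence. The existential case is the supremum in B
  (whenever it exists; for well behaved models it always does).\<close>
function bv :: "('m \<Rightarrow> 'm \<Rightarrow> 'b::boolean_algebra) \<Rightarrow> ('r \<Rightarrow> 'm list \<Rightarrow> 'b) \<Rightarrow> ('c \<Rightarrow> 'm)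
    \<Rightarrow> ('r, 'c, 'm) fm \<Rightarrow> 'b" where
  "bv eq rel cst (Eq t u) = eq (tm cst t) (tm cst u)"
| "bv eq rel cst (Rel R ts) = rel R (map (tm cst) ts)"
| "bv eq rel cst (And p q) = inf (bv eq rel cst p) (bv eq rel cst q)"
| "bv eq rel cst (Neg p) = - bv eq rel cst p"
| "bv eq rel cst (Ex x p) = (THE b. is_sup (range (\<lambda>\<sigma>. bv eq rel cst (subst x \<sigma> p))) b)"
  by pat_completeness auto
termination
  by (relation "measure (\<lambda>(_, _, _, p). fdepth p)") auto

definition bvmodel :: "('r \<Rightarrow> nat) \<Rightarrow> ('m \<Rightarrow> 'm \<Rightarrow> 'b::boolean_algebra) \<Rightarrow> ('r \<Rightarrow> 'm list \<Rightarrow> 'b) \<Rightarrow> bool" where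
  "bvmodel ar eq rel \<longleftrightarrow>
     (\<forall>\<sigma>. eq \<sigma> \<sigma> = top) \<and>
     (\<forall>\<sigma> \<tau>. eq \<sigma> \<tau> = eq \<tau> \<sigma>) \<and>
     (\<forall>\<sigma> \<tau> \<pi>. inf (eq \<sigma> \<tau>) (eq \<tau> \<pi>) \<le> eq \<sigma> \<pi>) \<and>
     (\<forall>R \<sigma>s \<tau>s. length \<sigma>s = ar R \<and> length \<tau>s = ar R \<longrightarrow>
        inf (foldr inf (map2 eq \<sigma>s \<tau>s) top) (rel R \<sigma>s) \<le> rel R \<tau>s)"

text \<open>Well behaved: the value of every L_M-sentence lies in B. Since B is dense in its
  completion RO(B+), this is equivalent to: every supremum arising in the evaluation of
  an existential sentence exists in B (and then coincides with the one in RO(B+)).\<close>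
definition well_behaved :: "('r \<Rightarrow> nat) \<Rightarrow> ('m \<Rightarrow> 'm \<Rightarrow> 'b::boolean_algebra) \<Rightarrow> ('r \<Rightarrow> 'm list \<Rightarrow> 'b)
    \<Rightarrow> ('c \<Rightarrow> 'm) \<Rightarrow> bool" where
  "well_behaved ar eq rel cst \<longleftrightarrow>
     (\<forall>x p. wf ar p \<and> fv (Ex x p) = {} \<longrightarrow>
        (\<exists>b. is_sup (range (\<lambda>\<sigma>. bv eq rel cst (subst x \<sigma> p))) b))"

definition ultrafilter :: "'b::boolean_algebra set \<Rightarrow> bool" where
  "ultrafilter G \<longleftrightarrow> top \<in> G \<and> bot \<notin> G \<and>
     (\<forall>a\<in>G. \<forall>b\<in>G. inf a b \<in> G) \<and> (\<forall>a\<in>G. \<forall>b. a \<le> b \<longrightarrow> b \<in> G) \<and>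
     (\<forall>a. a \<in> G \<or> - a \<in> G)"

fun te :: "('c \<Rightarrow> 'd) \<Rightarrow> ('m \<Rightarrow> 'd) \<Rightarrow> (nat \<Rightarrow> 'd) \<Rightarrow> ('c, 'm) trm \<Rightarrow> 'd" where
  "te ci pi e (Var x) = e x"
| "te ci pi e (Cst c) = ci c"
| "te ci pi e (Par m) = pi m"

fun sat :: "'d set \<Rightarrow> ('r \<Rightarrow> 'd list \<Rightarrow> bool) \<Rightarrow> ('c \<Rightarrow> 'd) \<Rightarrow> ('m \<Rightarrow> 'd) \<Rightarrow> (nat \<Rightarrow> 'd)
    \<Rightarrow> ('r, 'c, 'm) fm \<Rightarrow> bool" where
  "sat D ri ci pi e (Eq t u) = (te ci pi e t = te ci pi e u)"
| "sat D ri ci pi e (Rel R ts) = ri R (map (te ci pi e) ts)"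
| "sat D ri ci pi e (And p q) = (sat D ri ci pi e p \<and> sat D ri ci pi e q)"
| "sat D ri ci pi e (Neg p) = (\<not> sat D ri ci pi e p)"
| "sat D ri ci pi e (Ex x p) = (\<exists>d\<in>D. sat D ri ci pi (e(x := d)) p)"

definition cls :: "('m \<Rightarrow> 'm \<Rightarrow> 'b) \<Rightarrow> 'b set \<Rightarrow> 'm \<Rightarrow> 'm set" where
  "cls eq G \<sigma> = {\<tau>. eq \<tau> \<sigma> \<in> G}"

definition qrel :: "('r \<Rightarrow> nat) \<Rightarrow> ('m \<Rightarrow> 'm \<Rightarrow> 'b) \<Rightarrow> ('r \<Rightarrow> 'm list \<Rightarrow> 'b) \<Rightarrow> 'b set
    \<Rightarrow> 'r \<Rightarrow> 'm set list \<Rightarrow> bool" where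
  "qrel ar eq rel G R ds \<longleftrightarrow>
     (\<exists>\<sigma>s. length \<sigma>s = ar R \<and> ds = map (cls eq G) \<sigma>s \<and> rel R \<sigma>s \<in> G)"

definition qsat :: "('r \<Rightarrow> nat) \<Rightarrow> ('m \<Rightarrow> 'm \<Rightarrow> 'b) \<Rightarrow> ('r \<Rightarrow> 'm list \<Rightarrow> 'b) \<Rightarrow> ('c \<Rightarrow> 'm)
    \<Rightarrow> 'b set \<Rightarrow> (nat \<Rightarrow> 'm set) \<Rightarrow> ('r, 'c, 'm) fm \<Rightarrow> bool" where
  "qsat ar eq rel cst G e p =
     sat (range (cls eq G)) (qrel ar eq rel G) (\<lambda>c. cls eq G (cst c)) (cls eq G) e p"

definition full :: "('r \<Rightarrow> nat) \<Rightarrow> ('m \<Rightarrow> 'm \<Rightarrow> 'b::boolean_algebra) \<Rightarrow> ('r \<Rightarrow> 'm list \<Rightarrow> 'b)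
    \<Rightarrow> ('c \<Rightarrow> 'm) \<Rightarrow> bool" where
  "full ar eq rel cst \<longleftrightarrow>
     (\<forall>G. ultrafilter G \<longrightarrow>
        (\<forall>p \<tau>. wf ar p \<and> pars p = {} \<longrightarrow>
           (qsat ar eq rel cst G (\<lambda>x. cls eq G (\<tau> x)) p
              \<longleftrightarrow> bv eq rel cst (substs (\<lambda>x. Some (\<tau> x)) p) \<in> G)))"

end

theory Submission
  imports Defs
begin

lemma substs_trm_comp:
  "substs_trm t (substs_trm s u) = substs_trm (\<lambda>y. case s y of None \<Rightarrow> t y | Some m \<Rightarrow> Some m) u"
  by (cases u) (auto split: option.splits)

lemma substs_comp:
  "substs t (substs s p) = substs (\<lambda>y. case s y of None \<Rightarrow> t y | Some m \<Rightarrow> Some m) p"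
proof (induction p arbitrary: s t)
  case (Ex x p)
  have "(\<lambda>y. case (s(x := None)) y of None \<Rightarrow> (t(x := None)) y | Some m \<Rightarrow> Some m)
      = (\<lambda>y. case s y of None \<Rightarrow> t y | Some m \<Rightarrow> Some m)(x := None)"
    by (rule ext) (auto split: option.splits)
  then show ?case using Ex by simp
qed (auto simp: substs_trm_comp)

lemma subst_comp:
  "subst x \<sigma> (substs (\<lambda>y. if y = x then None else Some (e y)) p) = substs (\<lambda>y. Some ((e(x := \<sigma>)) y)) p"
proof -
  have "(\<lambda>y. case (if y = x then None else Some (e y)) of None \<Rightarrow> ((\<lambda>_. None)(x := Some \<sigma>)) y | Some m \<Rightarrow> Some m)
     = (\<lambda>y. Some ((e(x := \<sigma>)) y))" by (rule ext) auto
  then show ?thesis unfolding subst_def by (simp add: substs_comp)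
qed

lemma wf_substs [simp]: "wf ar (substs s p) = wf ar p"
  by (induction p arbitrary: s) auto

lemma fv_trm_substs: "fv_trm (substs_trm s u) \<subseteq> {y\<in>fv_trm u. s y = None}"
  by (cases u) (auto split: option.splits)

lemma fv_substs: "fv (substs s p) \<subseteq> {y\<in>fv p. s y = None}"
proof (induction p arbitrary: s)
  case (Rel R ts)
  then show ?case using fv_trm_substs by fastforce
next
  case (Eq t u) then show ?case using fv_trm_substs[of s t] fv_trm_substs[of s u] by auto
next
  case (Ex x p) then show ?case by fastforce
qed auto

lemma is_sup_unique: "is_sup S a \<Longrightarrow> is_sup S b \<Longrightarrow> a = b"
  unfolding is_sup_def by (meson order.antisym)

lemma bv_Ex_sup: "is_sup (range (\<lambda>\<sigma>. bv eq rel cst (subst x \<sigma> p))) b \<Longrightarrow> bv eq rel cst (Ex x p) = b"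
  using is_sup_unique by (simp, blast)


lemma uf_up: "ultrafilter G \<Longrightarrow> a \<in> G \<Longrightarrow> a \<le> b \<Longrightarrow> b \<in> G"
  unfolding ultrafilter_def by blast

lemma uf_inf: "ultrafilter G \<Longrightarrow> inf a b \<in> G \<longleftrightarrow> a \<in> G \<and> b \<in> G"
  unfolding ultrafilter_def by (meson inf.cobounded1 inf.cobounded2)

lemma uf_neg: "ultrafilter G \<Longrightarrow> - a \<in> G \<longleftrightarrow> a \<notin> G"
  unfolding ultrafilter_def by (metis inf_compl_bot)

lemma uf_sup: "ultrafilter G \<Longrightarrow> sup a b \<in> G \<longleftrightarrow> a \<in> G \<or> b \<in> G"
proof -
  assume G: "ultrafilter G"
  have "- sup a b = inf (- a) (- b)" by simp
  then show ?thesis using uf_neg[OF G] uf_inf[OF G] by metis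
qed

lemma uf_foldr_sup: "ultrafilter G \<Longrightarrow> foldr sup (map g xs) bot \<in> G \<longleftrightarrow> (\<exists>x\<in>set xs. g x \<in> G)"
  by (induction xs) (auto simp: uf_sup ultrafilter_def)

lemma cls_eq_iff:
  assumes M: "bvmodel ar eq rel" and G: "ultrafilter G"
  shows "cls eq G \<sigma> = cls eq G \<tau> \<longleftrightarrow> eq \<sigma> \<tau> \<in> G"
proof
  assume "cls eq G \<sigma> = cls eq G \<tau>"
  moreover have "\<sigma> \<in> cls eq G \<sigma>" using M G unfolding cls_def bvmodel_def ultrafilter_def by simp
  ultimately show "eq \<sigma> \<tau> \<in> G" unfolding cls_def by auto
next
  assume st: "eq \<sigma> \<tau> \<in> G"
  have ts: "eq \<tau> \<sigma> \<in> G" using st M unfolding bvmodel_def by metis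
  show "cls eq G \<sigma> = cls eq G \<tau>"
  proof (rule set_eqI)
    fix \<rho>
    have 1: "inf (eq \<rho> \<sigma>) (eq \<sigma> \<tau>) \<le> eq \<rho> \<tau>" "inf (eq \<rho> \<tau>) (eq \<tau> \<sigma>) \<le> eq \<rho> \<sigma>"
      using M unfolding bvmodel_def by blast+
    show "\<rho> \<in> cls eq G \<sigma> \<longleftrightarrow> \<rho> \<in> cls eq G \<tau>"
      unfolding cls_def using 1 st ts uf_inf[OF G] uf_up[OF G] by auto
  qed
qed

lemma foldr_inf_map2:
  assumes M: "bvmodel ar eq rel" and G: "ultrafilter G"
  shows "length \<sigma>s = length \<tau>s \<Longrightarrow> map (cls eq G) \<sigma>s = map (cls eq G) \<tau>s \<Longrightarrow>
     foldr inf (map2 eq \<sigma>s \<tau>s) top \<in> G"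
proof (induction \<sigma>s \<tau>s rule: list_induct2)
  case Nil then show ?case using G by (simp add: ultrafilter_def)
next
  case (Cons x xs y ys)
  then show ?case using cls_eq_iff[OF M G] uf_inf[OF G] by simp
qed

lemma te_cls: "te (\<lambda>c. cls eq G (cst c)) (cls eq G) (\<lambda>y. cls eq G (e y)) t
   = cls eq G (tm cst (substs_trm (\<lambda>y. Some (e y)) t))"
  by (cases t) auto

lemma te_cls': "te (\<lambda>c. cls eq G (cst c)) (cls eq G) (\<lambda>y. cls eq G (e y))
   = (\<lambda>t. cls eq G (tm cst (substs_trm (\<lambda>y. Some (e y)) t)))"
  by (rule ext) (rule te_cls)

lemma bex_range_iff: "(\<exists>d\<in>range f. P d) = (\<exists>\<sigma>. P (f \<sigma>))"
  by auto

lemma los: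
  assumes M: "bvmodel ar eq rel" and G: "ultrafilter G"
    and W: "\<forall>(p :: ('r, 'c, 'm) fm) x0 (\<tau> :: nat \<Rightarrow> 'm). wf ar p \<longrightarrow>
       (let q = substs (\<lambda>y. if y = x0 then None else Some (\<tau> y)) p in
        \<exists>\<sigma>s :: 'm list.
          is_sup (range (\<lambda>\<sigma>. bv eq rel cst (subst x0 \<sigma> q)))
                 (foldr sup (map (\<lambda>\<sigma>. bv eq rel cst (subst x0 \<sigma> q)) \<sigma>s) bot))"
  shows "wf ar (p :: ('r, 'c, 'm) fm) \<Longrightarrow> qsat ar eq rel cst G (\<lambda>y. cls eq G (e y)) p
     \<longleftrightarrow> bv eq rel cst (substs (\<lambda>y. Some (e y)) p) \<in> G"
proof (induction p arbitrary: e)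
  case (Eq t u)
  then show ?case unfolding qsat_def using cls_eq_iff[OF M G] by (simp add: te_cls)
next
  case (Rel R ts)
  let ?\<tau>s = "map (tm cst \<circ> substs_trm (\<lambda>y. Some (e y))) ts"
  have len: "length ts = ar R" using Rel by simp
  have "qrel ar eq rel G R (map (te (\<lambda>c. cls eq G (cst c)) (cls eq G) (\<lambda>y. cls eq G (e y))) ts)
     \<longleftrightarrow> rel R ?\<tau>s \<in> G"
  proof
    assume "qrel ar eq rel G R (map (te (\<lambda>c. cls eq G (cst c)) (cls eq G) (\<lambda>y. cls eq G (e y))) ts)"
    then obtain \<sigma>s where s: "length \<sigma>s = ar R" "map (cls eq G) \<sigma>s = map (cls eq G) ?\<tau>s" "rel R \<sigma>s \<in> G"
      unfolding qrel_def by (auto simp: te_cls' comp_def)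
    have "foldr inf (map2 eq \<sigma>s ?\<tau>s) top \<in> G"
      using foldr_inf_map2[OF M G, of \<sigma>s ?\<tau>s] s len by simp
    moreover have "inf (foldr inf (map2 eq \<sigma>s ?\<tau>s) top) (rel R \<sigma>s) \<le> rel R ?\<tau>s"
      using M s len unfolding bvmodel_def by simp
    ultimately show "rel R ?\<tau>s \<in> G" using s uf_inf[OF G] uf_up[OF G] by blast
  next
    assume "rel R ?\<tau>s \<in> G"
    then show "qrel ar eq rel G R (map (te (\<lambda>c. cls eq G (cst c)) (cls eq G) (\<lambda>y. cls eq G (e y))) ts)"
      unfolding qrel_def using len by (auto simp: te_cls' comp_def intro!: exI[of _ ?\<tau>s])
  qed
  then show ?case unfolding qsat_def by (simp add: comp_def)
next
  case (And p q)
  then show ?case unfolding qsat_def using uf_inf[OF G] by simp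
next
  case (Neg p)
  then show ?case unfolding qsat_def using uf_neg[OF G] by simp
next
  case (Ex x p)
  define q where "q = substs (\<lambda>y. if y = x then None else Some (e y)) p"
  define a where "a = (\<lambda>\<sigma>. bv eq rel cst (subst x \<sigma> q))"
  have wfp: "wf ar p" using Ex by simp
  obtain \<sigma>s where sup: "is_sup (range a) (foldr sup (map a \<sigma>s) bot)"
    using W wfp unfolding a_def q_def Let_def by blast
  have 1: "(\<lambda>y. Some (e y))(x := None) = (\<lambda>y. if y = x then None else Some (e y))" by auto
  have bvE: "bv eq rel cst (substs (\<lambda>y. Some (e y)) (Ex x p)) = foldr sup (map a \<sigma>s) bot"
    using bv_Ex_sup[OF sup[unfolded a_def]] by (simp add: 1 q_def a_def)
  have a_eq: "a \<sigma> = bv eq rel cst (substs (\<lambda>y. Some ((e(x := \<sigma>)) y)) p)" for \<sigma>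
    unfolding a_def q_def by (simp add: subst_comp)
  have 2: "(\<lambda>y. cls eq G (e y))(x := cls eq G \<sigma>) = (\<lambda>y. cls eq G ((e(x := \<sigma>)) y))" for \<sigma>
    by (rule ext) auto
  have "qsat ar eq rel cst G (\<lambda>y. cls eq G (e y)) (Ex x p) \<longleftrightarrow>
     (\<exists>\<sigma>. qsat ar eq rel cst G (\<lambda>y. cls eq G ((e(x := \<sigma>)) y)) p)"
    unfolding qsat_def sat.simps by (subst bex_range_iff) (simp only: 2)
  also have "\<dots> \<longleftrightarrow> (\<exists>\<sigma>. a \<sigma> \<in> G)"
    unfolding a_eq using Ex.IH[OF wfp] by presburger
  also have "\<dots> \<longleftrightarrow> foldr sup (map a \<sigma>s) bot \<in> G"
  proof
    assume "\<exists>\<sigma>. a \<sigma> \<in> G"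
    then obtain \<sigma> where s1: "a \<sigma> \<in> G" by blast
    have "a \<sigma> \<le> foldr sup (map a \<sigma>s) bot" using sup unfolding is_sup_def by simp
    then show "foldr sup (map a \<sigma>s) bot \<in> G" using s1 uf_up[OF G] by metis
  next
    assume "foldr sup (map a \<sigma>s) bot \<in> G"
    then show "\<exists>\<sigma>. a \<sigma> \<in> G" unfolding uf_foldr_sup[OF G] by blast
  qed
  finally show ?case unfolding bvE .
qed


lemma foldr_sup_start:
  "foldr sup (map (a :: 'm \<Rightarrow> 'b::boolean_algebra) xs) c = sup (foldr sup (map a xs) bot) c"
  by (induction xs) (simp_all add: sup_assoc)

lemma foldr_sup_append:
  "foldr sup (map (a :: 'm \<Rightarrow> 'b::boolean_algebra) (xs @ ys)) bot = sup (foldr sup (map a xs) bot) (foldr sup (map a ys) bot)"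
  unfolding map_append foldr_append by (rule foldr_sup_start)

definition pfilt :: "'b::boolean_algebra \<Rightarrow> ('m \<Rightarrow> 'b) \<Rightarrow> 'b set set" where
  "pfilt b a = {G. top \<in> G \<and> bot \<notin> G \<and> (\<forall>x\<in>G. \<forall>y\<in>G. inf x y \<in> G) \<and>
      (\<forall>x\<in>G. \<forall>y. x \<le> y \<longrightarrow> y \<in> G) \<and> b \<in> G \<and> (\<forall>\<sigma>. - a \<sigma> \<in> G)}"

lemma pfiltD:
  assumes "G \<in> pfilt b a"
  shows "top \<in> G" "bot \<notin> G" "\<And>x y. x \<in> G \<Longrightarrow> y \<in> G \<Longrightarrow> inf x y \<in> G"
    "\<And>x y. x \<in> G \<Longrightarrow> x \<le> y \<Longrightarrow> y \<in> G" "b \<in> G" "\<And>\<sigma>. - a \<sigma> \<in> G"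
  using assms unfolding pfilt_def by auto

lemma ultra_exists:
  fixes b :: "'b::boolean_algebra" and a :: "'m \<Rightarrow> 'b"
  assumes nle: "\<forall>\<sigma>s. \<not> b \<le> foldr sup (map a \<sigma>s) bot"
  shows "\<exists>G. ultrafilter G \<and> b \<in> G \<and> (\<forall>\<sigma>. - a \<sigma> \<in> G)"
proof -
  let ?S = "\<lambda>\<sigma>s. foldr sup (map a \<sigma>s) bot"
  define G0 where "G0 = {c. \<exists>\<sigma>s. inf b (- ?S \<sigma>s) \<le> c}"
  have G0: "G0 \<in> pfilt b a"
    unfolding pfilt_def
  proof (intro CollectI conjI ballI allI impI)
    show "top \<in> G0" unfolding G0_def by simp
    show "bot \<notin> G0"
    proof
      assume "bot \<in> G0"
      then obtain \<sigma>s where "inf b (- ?S \<sigma>s) \<le> bot" unfolding G0_def by blast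
      then have "b \<le> ?S \<sigma>s" by (simp add: inf_shunt bot_unique)
      then show False using nle by blast
    qed
    show "b \<in> G0" unfolding G0_def by (auto intro!: exI[of _ "[]"])
    fix \<sigma> show "- a \<sigma> \<in> G0" unfolding G0_def by (auto intro!: exI[of _ "[\<sigma>]"])
  next
    fix x y assume "x \<in> G0" "y \<in> G0"
    then obtain xs ys where "inf b (- ?S xs) \<le> x" "inf b (- ?S ys) \<le> y" unfolding G0_def by blast
    moreover have "inf b (- ?S (xs @ ys)) = inf (inf b (- ?S xs)) (inf b (- ?S ys))"
      unfolding foldr_sup_append by (simp add: inf_aci)
    ultimately have "inf b (- ?S (xs @ ys)) \<le> inf x y"
      by (metis inf_mono)
    then show "inf x y \<in> G0" unfolding G0_def by blast
  next
    fix x y assume "x \<in> G0" "x \<le> y"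
    then show "y \<in> G0" unfolding G0_def using order_trans by blast
  qed
  have "\<forall>C\<in>chains (pfilt b a). \<exists>U\<in>pfilt b a. \<forall>X\<in>C. X \<subseteq> U"
  proof
    fix C assume C: "C \<in> chains (pfilt b a)"
    show "\<exists>U\<in>pfilt b a. \<forall>X\<in>C. X \<subseteq> U"
    proof (cases "C = {}")
      case True then show ?thesis using G0 by blast
    next
      case False
      have sub: "C \<subseteq> pfilt b a" and ch: "\<forall>X\<in>C. \<forall>Y\<in>C. X \<subseteq> Y \<or> Y \<subseteq> X"
        using C unfolding chains_def chain_subset_def by auto
      have "\<Union>C \<in> pfilt b a"
        unfolding pfilt_def
      proof (intro CollectI conjI ballI allI impI)
        obtain X0 where X0: "X0 \<in> C" using False by blast
        then have X0p: "X0 \<in> pfilt b a" using sub by blast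
        show "top \<in> \<Union>C" using X0 pfiltD(1)[OF X0p] by blast
        show "b \<in> \<Union>C" using X0 pfiltD(5)[OF X0p] by blast
        show "bot \<notin> \<Union>C" using sub pfiltD(2) by blast
        fix \<sigma> show "- a \<sigma> \<in> \<Union>C" using X0 pfiltD(6)[OF X0p] by blast
      next
        fix x y assume "x \<in> \<Union>C" "y \<in> \<Union>C"
        then obtain X Y where XY: "x \<in> X" "y \<in> Y" "X \<in> C" "Y \<in> C" by blast
        then have "X \<subseteq> Y \<or> Y \<subseteq> X" using ch by blast
        then show "inf x y \<in> \<Union>C"
        proof
          assume "X \<subseteq> Y"
          then have "inf x y \<in> Y" using XY sub pfiltD(3) by blast
          then show ?thesis using XY by blast
        next
          assume "Y \<subseteq> X"
          then have "inf x y \<in> X" using XY sub pfiltD(3) by blast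
          then show ?thesis using XY by blast
        qed
      next
        fix x y assume "x \<in> \<Union>C" "x \<le> y"
        then show "y \<in> \<Union>C" using sub pfiltD(4) by blast
      qed
      then show ?thesis by blast
    qed
  qed
  from Zorn_Lemma2[OF this] obtain M where M: "M \<in> pfilt b a"
    and max: "\<forall>X\<in>pfilt b a. M \<subseteq> X \<longrightarrow> X = M" by blast
  have "\<forall>x. x \<in> M \<or> - x \<in> M"
  proof (intro allI)
    fix x
    show "x \<in> M \<or> - x \<in> M"
    proof (rule ccontr)
      assume nx: "\<not> (x \<in> M \<or> - x \<in> M)"
      define M' where "M' = {c. \<exists>m\<in>M. inf m x \<le> c}"
      have upM: "\<forall>x\<in>M. \<forall>y. x \<le> y \<longrightarrow> y \<in> M" and infM: "\<forall>x\<in>M. \<forall>y\<in>M. inf x y \<in> M"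
        and topM: "top \<in> M"
 using pfiltD[OF M] by auto
      have "M' \<in> pfilt b a"
        unfolding pfilt_def
      proof (intro CollectI conjI ballI allI impI)
        show "top \<in> M'" unfolding M'_def using topM by auto
        show "bot \<notin> M'"
        proof
          assume "bot \<in> M'"
          then obtain m where "m \<in> M" "inf m x \<le> bot" unfolding M'_def by blast
          then have "m \<le> - x" by (simp add: inf_shunt bot_unique)
          then show False using nx upM \<open>m \<in> M\<close> by blast
        qed
        show "b \<in> M'" unfolding M'_def using pfiltD(5)[OF M] inf.cobounded1 by blast
        fix \<sigma> show "- a \<sigma> \<in> M'" unfolding M'_def using pfiltD(6)[OF M] inf.cobounded1 by blast
      next
        fix y z assume "y \<in> M'" "z \<in> M'"
        then obtain m1 m2 where "m1 \<in> M" "m2 \<in> M" "inf m1 x \<le> y" "inf m2 x \<le> z"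
          unfolding M'_def by blast
        moreover have "inf (inf m1 m2) x \<le> inf (inf m1 x) (inf m2 x)"
          by (simp add: inf.coboundedI1 inf.coboundedI2)
        ultimately have "inf (inf m1 m2) x \<le> inf y z" "inf m1 m2 \<in> M"
          using infM by (meson inf_mono order_trans)+
        then show "inf y z \<in> M'" unfolding M'_def by blast
      next
        fix y z assume "y \<in> M'" "y \<le> z"
        then show "z \<in> M'" unfolding M'_def using order_trans by blast
      qed
      moreover have "M \<subseteq> M'" unfolding M'_def using inf.cobounded1 by blast
      ultimately have "M' = M" using max by blast
      moreover have "x \<in> M'" unfolding M'_def using topM by auto
      ultimately show False using nx by blast
    qed
  qed
  then have "ultrafilter M" using pfiltD[OF M] unfolding ultrafilter_def by blast
  then show ?thesis using pfiltD[OF M] by blast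
qed


fun abst_trm :: "('m \<Rightarrow> nat) \<Rightarrow> ('c, 'm) trm \<Rightarrow> ('c, 'm) trm" where
  "abst_trm f (Par m) = Var (f m)"
| "abst_trm f (Var x) = Var x"
| "abst_trm f (Cst c) = Cst c"

fun abst :: "('m \<Rightarrow> nat) \<Rightarrow> ('r, 'c, 'm) fm \<Rightarrow> ('r, 'c, 'm) fm" where
  "abst f (Eq t u) = Eq (abst_trm f t) (abst_trm f u)"
| "abst f (Rel R ts) = Rel R (map (abst_trm f) ts)"
| "abst f (And p q) = And (abst f p) (abst f q)"
| "abst f (Neg p) = Neg (abst f p)"
| "abst f (Ex x p) = Ex x (abst f p)"

fun vars :: "('r, 'c, 'm) fm \<Rightarrow> nat set" where
  "vars (Eq t u) = fv_trm t \<union> fv_trm u"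
| "vars (Rel R ts) = (\<Union>t\<in>set ts. fv_trm t)"
| "vars (And p q) = vars p \<union> vars q"
| "vars (Neg p) = vars p"
| "vars (Ex x p) = insert x (vars p)"

lemma pars_trm_abst [simp]: "pars_trm (abst_trm f t) = {}"
  by (cases t) auto

lemma pars_abst [simp]: "pars (abst f p) = {}"
  by (induction p) auto

lemma wf_abst [simp]: "wf ar (abst f p) = wf ar p"
  by (induction p) auto

lemma finite_fv_trm [simp]: "finite (fv_trm t)"
  by (cases t) auto

lemma finite_pars_trm [simp]: "finite (pars_trm t)"
  by (cases t) auto

lemma finite_vars: "finite (vars p)"
  by (induction p) auto

lemma finite_pars: "finite (pars p)"
  by (induction p) auto

lemma abst_substs_trm:
  "\<forall>m\<in>pars_trm u. s (f m) = Some m \<Longrightarrow> \<forall>y\<in>fv_trm u. s y = s0 y \<Longrightarrow>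
   substs_trm s (abst_trm f u) = substs_trm s0 u"
  by (cases u) auto

lemma abst_substs:
  "\<forall>m\<in>pars p. s (f m) = Some m \<and> f m \<notin> vars p \<Longrightarrow> \<forall>y\<in>vars p. s y = s0 y \<Longrightarrow>
   substs s (abst f p) = substs s0 p"
proof (induction p arbitrary: s s0)
  case (Eq t u)
  then show ?case using abst_substs_trm[of t s f s0] abst_substs_trm[of u s f s0] by simp
next
  case (Rel R ts)
  have "map (substs_trm s \<circ> abst_trm f) ts = map (substs_trm s0) ts"
  proof (rule map_cong[OF refl])
    fix t assume "t \<in> set ts"
    then show "(substs_trm s \<circ> abst_trm f) t = substs_trm s0 t"
      using Rel abst_substs_trm[of t s f s0] by auto
  qed
  then show ?case by simp
next
  case (And p q)
  then show ?case by simp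
next
  case (Neg p)
  then show ?case by simp
next
  case (Ex x p)
  have "substs (s(x := None)) (abst f p) = substs (s0(x := None)) p"
    using Ex.prems by (intro Ex.IH) auto
  then show ?case by simp
qed

lemma full_W:
  fixes p :: "('r, 'c, 'm) fm" and eq :: "'m \<Rightarrow> 'm \<Rightarrow> 'b::boolean_algebra"
  assumes F: "full ar eq rel cst" and G: "ultrafilter G" and wfp: "wf ar p" and pp: "pars p = {}"
    and inG: "bv eq rel cst (Ex x (substs (\<lambda>y. if y = x then None else Some (\<tau> y)) p)) \<in> G"
  shows "\<exists>\<sigma>. bv eq rel cst (subst x \<sigma> (substs (\<lambda>y. if y = x then None else Some (\<tau> y)) p)) \<in> G"
proof -
  have F': "qsat ar eq rel cst G (\<lambda>y. cls eq G (e y)) p' \<longleftrightarrow> bv eq rel cst (substs (\<lambda>y. Some (e y)) p') \<in> G"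
    if "wf ar p'" "pars p' = {}" for e and p' :: "('r, 'c, 'm) fm"
    using F G that unfolding full_def by blast
  have 1: "(\<lambda>y. Some (\<tau> y))(x := None) = (\<lambda>y. if y = x then None else Some (\<tau> y))" by (rule ext) auto
  have "qsat ar eq rel cst G (\<lambda>y. cls eq G (\<tau> y)) (Ex x p)"
    using F'[of "Ex x p" \<tau>] wfp pp inG by (simp add: 1)
  then obtain d where "d \<in> range (cls eq G)" "sat (range (cls eq G)) (qrel ar eq rel G) (\<lambda>c. cls eq G (cst c))
             (cls eq G) ((\<lambda>y. cls eq G (\<tau> y))(x := d)) p"
    unfolding qsat_def by auto
  then obtain \<sigma> where "sat (range (cls eq G)) (qrel ar eq rel G) (\<lambda>c. cls eq G (cst c))
             (cls eq G) ((\<lambda>y. cls eq G (\<tau> y))(x := cls eq G \<sigma>)) p" by blast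
  moreover have "(\<lambda>y. cls eq G (\<tau> y))(x := cls eq G \<sigma>) = (\<lambda>y. cls eq G ((\<tau>(x := \<sigma>)) y))"
    by (rule ext) auto
  ultimately have "qsat ar eq rel cst G (\<lambda>y. cls eq G ((\<tau>(x := \<sigma>)) y)) p"
    unfolding qsat_def by simp
  then have "bv eq rel cst (substs (\<lambda>y. Some ((\<tau>(x := \<sigma>)) y)) p) \<in> G"
    using F' wfp pp by blast
  then show ?thesis by (auto simp: subst_comp)
qed


theorem mainTheorem2:
  fixes ar :: "'r \<Rightarrow> nat"
    and eq :: "'m \<Rightarrow> 'm \<Rightarrow> 'b::boolean_algebra"
    and rel :: "'r \<Rightarrow> 'm list \<Rightarrow> 'b"
    and cst :: "'c \<Rightarrow> 'm"
  assumes "bvmodel ar eq rel"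
    and "well_behaved ar eq rel cst"
  shows "full ar eq rel cst \<longleftrightarrow>
    (\<forall>(p :: ('r, 'c, 'm) fm) x0 (\<tau> :: nat \<Rightarrow> 'm). wf ar p \<longrightarrow>
       (let q = substs (\<lambda>y. if y = x0 then None else Some (\<tau> y)) p in
        \<exists>\<sigma>s :: 'm list.
          is_sup (range (\<lambda>\<sigma>. bv eq rel cst (subst x0 \<sigma> q)))
                 (foldr sup (map (\<lambda>\<sigma>. bv eq rel cst (subst x0 \<sigma> q)) \<sigma>s) bot)))"
proof
  assume W: "\<forall>(p :: ('r, 'c, 'm) fm) x0 (\<tau> :: nat \<Rightarrow> 'm). wf ar p \<longrightarrow>
       (let q = substs (\<lambda>y. if y = x0 then None else Some (\<tau> y)) p in
        \<exists>\<sigma>s :: 'm list.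
          is_sup (range (\<lambda>\<sigma>. bv eq rel cst (subst x0 \<sigma> q)))
                 (foldr sup (map (\<lambda>\<sigma>. bv eq rel cst (subst x0 \<sigma> q)) \<sigma>s) bot))"
  show "full ar eq rel cst"
    unfolding full_def using los[OF assms(1) _ W] by blast
next
  assume F: "full ar eq rel cst"
  show "\<forall>(p :: ('r, 'c, 'm) fm) x0 (\<tau> :: nat \<Rightarrow> 'm). wf ar p \<longrightarrow>
       (let q = substs (\<lambda>y. if y = x0 then None else Some (\<tau> y)) p in
        \<exists>\<sigma>s :: 'm list.
          is_sup (range (\<lambda>\<sigma>. bv eq rel cst (subst x0 \<sigma> q)))
                 (foldr sup (map (\<lambda>\<sigma>. bv eq rel cst (subst x0 \<sigma> q)) \<sigma>s) bot))"
    unfolding Let_def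
  proof (intro allI impI)
    fix p :: "('r, 'c, 'm) fm" and x0 \<tau>
    assume wfp: "wf ar p"
    define q where "q = substs (\<lambda>y. if y = x0 then None else Some (\<tau> y)) p"
    define a where "a = (\<lambda>\<sigma>. bv eq rel cst (subst x0 \<sigma> q))"
    have fvq: "fv (Ex x0 q) = {}" using fv_substs[of "\<lambda>y. if y = x0 then None else Some (\<tau> y)" p]
      unfolding q_def by (auto split: if_splits)
    have wfq: "wf ar q" using wfp unfolding q_def by simp
    obtain b where b: "is_sup (range a) b"
      using assms(2) fvq wfq unfolding well_behaved_def a_def by blast
    show "\<exists>\<sigma>s. is_sup (range (\<lambda>\<sigma>. bv eq rel cst (subst x0 \<sigma> q))) (foldr sup (map (\<lambda>\<sigma>. bv eq rel cst (subst x0 \<sigma> q)) \<sigma>s) bot)"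
    proof (rule ccontr)
      assume nex: "\<not> ?thesis"
      have nle: "\<forall>\<sigma>s. \<not> b \<le> foldr sup (map a \<sigma>s) bot"
      proof (intro allI notI)
        fix \<sigma>s assume ble: "b \<le> foldr sup (map a \<sigma>s) bot"
        have "is_sup (range a) (foldr sup (map a \<sigma>s) bot)"
          unfolding is_sup_def
        proof (intro conjI allI ballI impI)
          fix z assume "z \<in> range a" then show "z \<le> foldr sup (map a \<sigma>s) bot"
            using b ble unfolding is_sup_def by (meson order_trans)
        next
          fix c assume c: "\<forall>z\<in>range a. z \<le> c"
          have "\<forall>z\<in>set (map a \<sigma>s). z \<le> c" using c by auto
          then show "foldr sup (map a \<sigma>s) bot \<le> c"
            by (induction \<sigma>s) auto
        qed
        then show False using nex unfolding a_def by blast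
      qed
      obtain G where G: "ultrafilter G" "b \<in> G" "\<forall>\<sigma>. - a \<sigma> \<in> G"
        using ultra_exists[OF nle] by blast
      have bvE: "bv eq rel cst (Ex x0 q) = b" using bv_Ex_sup[of eq rel cst x0 q b] b unfolding a_def by simp
      obtain ms where ms: "set ms = pars p" using finite_list[OF finite_pars[of p]] by blast
      define N where "N = Suc (Max (insert x0 (vars p)))"
      have fin: "finite (insert x0 (vars p))" using finite_vars by blast
      have ltN: "y < N" if "y \<in> insert x0 (vars p)" for y
        unfolding N_def using Max_ge[OF fin that] by simp
      define f where "f = (\<lambda>m. N + (SOME i. i < length ms \<and> ms ! i = m))"
      define \<tau>' where "\<tau>' = (\<lambda>y. if N \<le> y then ms ! (y - N) else \<tau> y)"
      have fm: "N \<le> f m \<and> ms ! (f m - N) = m" if "m \<in> pars p" for m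
      proof -
        have "\<exists>i. i < length ms \<and> ms ! i = m" using that ms in_set_conv_nth[of m ms] by auto
        then have "(SOME i. i < length ms \<and> ms ! i = m) < length ms \<and> ms ! (SOME i. i < length ms \<and> ms ! i = m) = m"
          by (rule someI_ex)
        then show ?thesis unfolding f_def by simp
      qed
      have qq: "substs (\<lambda>y. if y = x0 then None else Some (\<tau>' y)) (abst f p) = q"
        unfolding q_def
      proof (rule abst_substs; intro ballI conjI)
        fix m assume m: "m \<in> pars p"
        have "f m \<noteq> x0" using fm[OF m] ltN[of x0] by auto
        then show "(if f m = x0 then None else Some (\<tau>' (f m))) = Some m"
          using fm[OF m] unfolding \<tau>'_def by simp
        show "f m \<notin> vars p" using fm[OF m] ltN by fastforce
      next
        fix y assume "y \<in> vars p"
        then have "y < N" using ltN by blast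
        then show "(if y = x0 then None else Some (\<tau>' y)) = (if y = x0 then None else Some (\<tau> y))"
          unfolding \<tau>'_def by simp
      qed
      have "\<exists>\<sigma>. bv eq rel cst (subst x0 \<sigma> (substs (\<lambda>y. if y = x0 then None else Some (\<tau>' y)) (abst f p))) \<in> G"
        by (rule full_W[OF F G(1)]) (use wfp G(2) bvE qq in auto)
      then obtain \<sigma> where "a \<sigma> \<in> G" unfolding qq a_def by blast
      then show False using G(3) uf_neg[OF G(1)] by blast
    qed
  qed
qed

end
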